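(* In the Chung–Lu random graph model, assume $S_2>S$, let $s\neq t$ be vertices and $r\ge1$ an integer with $2r<S_2/S$. Then $$E[NBP_r(s,t)]\le \frac{p_{st}\,(S_2/S)^{r-1}}{1-\frac{S}{S_2}}\exp\!\left(\frac{\left(2r\frac{S}{S_2}\right)^2p_{\max}}{1-\frac{2rS}{S_2}}\right).$$
   Context: Chung–Lu model: given $d_1,\dots,d_n>0$ with $S=\sum_i d_i$ and $\max_i d_i^2\le S$, each edge $\{i,j\}$ (including loops) of the random undirected graph on $\{1,\dots,n\}$ is present independently with probability $p_{ij}=d_id_j/S$. $S_2=\sum_i d_i^2$, $d_{\max}=\max_i d_i$, $p_{\max}=d_{\max}^2/S$. $NBP_r(s,t)$ is the number of nonbacktracking walks of length $r$ from $s$ to $t$: sequences $(x_1,\dots,x_{r+1})$ with $x_1=s$, $x_{r+1}=t$, every $\{x_i,x_{i+1}\}$ an edge of the graph, and $x_i\neq x_{i+2}$ for $1\le i\le r-1$. *)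

theory Defs
  imports "HOL-Probability.Probability"
begin

text \<open>Chung--Lu model on vertex set {1..n} with weights d. Undirected edges (including
loops) are represented as sets {i,j} with i,j in {1..n}; a graph is the indicator
function of its edge set.\<close>

definition CL_S :: "nat \<Rightarrow> (nat \<Rightarrow> real) \<Rightarrow> real" where
  "CL_S n d = (\<Sum>i\<in>{1..n}. d i)"

definition CL_S2 :: "nat \<Rightarrow> (nat \<Rightarrow> real) \<Rightarrow> real" where
  "CL_S2 n d = (\<Sum>i\<in>{1..n}. (d i)^2)"

definition CL_dmax :: "nat \<Rightarrow> (nat \<Rightarrow> real) \<Rightarrow> real" where
  "CL_dmax n d = Max (d ` {1..n})"

definition CL_pmax :: "nat \<Rightarrow> (nat \<Rightarrow> real) \<Rightarrow> real" where
  "CL_pmax n d = (CL_dmax n d)^2 / CL_S n d"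

definition CL_p :: "nat \<Rightarrow> (nat \<Rightarrow> real) \<Rightarrow> nat \<Rightarrow> nat \<Rightarrow> real" where
  "CL_p n d i j = d i * d j / CL_S n d"

definition CL_edges :: "nat \<Rightarrow> nat set set" where
  "CL_edges n = {{i, j} | i j. i \<in> {1..n} \<and> j \<in> {1..n}}"

definition CL_edge_prob :: "nat \<Rightarrow> (nat \<Rightarrow> real) \<Rightarrow> nat set \<Rightarrow> real" where
  "CL_edge_prob n d e = CL_p n d (Min e) (Max e)"

definition chung_lu :: "nat \<Rightarrow> (nat \<Rightarrow> real) \<Rightarrow> (nat set \<Rightarrow> bool) pmf" where
  "chung_lu n d = Pi_pmf (CL_edges n) False (\<lambda>e. bernoulli_pmf (CL_edge_prob n d e))"

text \<open>Number of nonbacktracking walks of length r from s to t in graph G on {1..n}: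
sequences (x_1,...,x_{r+1}) (0-indexed here) of vertices.\<close>
definition NBP :: "nat \<Rightarrow> (nat set \<Rightarrow> bool) \<Rightarrow> nat \<Rightarrow> nat \<Rightarrow> nat \<Rightarrow> nat" where
  "NBP n G r s t = card {xs :: nat list. length xs = r + 1 \<and> set xs \<subseteq> {1..n} \<and>
      xs ! 0 = s \<and> xs ! r = t \<and>
      (\<forall>i<r. G {xs ! i, xs ! (i + 1)}) \<and>
      (\<forall>i. i + 2 \<le> r \<longrightarrow> xs ! i \<noteq> xs ! (i + 2))}"

end

theory Submission
  imports Defs
begin

locale CLB =
  fixes n :: nat and d :: "nat \<Rightarrow> real" and t :: nat and R :: nat
  assumes dpos: "\<forall>i\<in>{1..n}. d i > 0"
    and dsq: "\<forall>i\<in>{1..n}. (d i)^2 \<le> CL_S n d"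
    and tn: "t \<in> {1..n}"
    and Rq: "real R * (CL_S n d / CL_S2 n d) < 1"
begin

abbreviation "S \<equiv> CL_S n d"
abbreviation "S2 \<equiv> CL_S2 n d"
abbreviation "dm \<equiv> CL_dmax n d"
definition "mu = S2 / S"
definition "q = S / S2"
definition "pm = dm^2 / S"
definition "a = real R * q"
definition "beta = 2 * pm * q * a / (1 - a)"
definition "rho = 1 + beta"
definition "g m = rho^m * (1 + real m * beta)"
definition "sig m = (\<Sum>j\<in>{1..<m}. a^j)"
definition "eta m = 2 * sig m * rho^m"
definition "H m = eta m * mu^m * q * dm / S"

lemma n_pos: "n \<ge> 1" using tn by auto

lemma S_pos: "S > 0"
proof -
  have "S = (\<Sum>i\<in>{1..n}. d i)" by (simp add: CL_S_def)
  also have "\<dots> > 0"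
  proof (rule sum_pos)
    fix i assume "i \<in> {1..n}" then show "d i > 0" using dpos by auto
  qed (use n_pos in auto)
  finally show ?thesis .
qed

lemma S2_pos: "S2 > 0"
proof -
  have "S2 = (\<Sum>i\<in>{1..n}. (d i)^2)" by (simp add: CL_S2_def)
  also have "\<dots> > 0"
  proof (rule sum_pos)
    fix i assume "i \<in> {1..n}" then have "d i > 0" using dpos by auto
    then show "(d i)^2 > 0" by simp
  qed (use n_pos in auto)
  finally show ?thesis .
qed

lemma mu_pos: "mu > 0" and q_pos: "q > 0" and muq: "mu * q = 1"
  using S_pos S2_pos by (auto simp: mu_def q_def)

lemma d_le_dm: "i \<in> {1..n} \<Longrightarrow> d i \<le> dm"
  unfolding CL_dmax_def by (intro Max_ge) auto

lemma dm_pos: "dm > 0"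
  using d_le_dm[OF tn] dpos tn by fastforce

lemma pm_nonneg: "pm \<ge> 0" using S_pos by (simp add: pm_def)

lemma a_lt1: "a < 1"
  using q_pos Rq by (auto simp: a_def q_def)
lemma a_nonneg': "a \<ge> 0" using q_pos by (simp add: a_def)

lemmas a_nonneg = a_nonneg'
lemma beta_nonneg: "beta \<ge> 0"
  using pm_nonneg q_pos a_nonneg a_lt1 by (simp add: beta_def)

lemma rho_ge1: "rho \<ge> 1" using beta_nonneg by (simp add: rho_def)

lemma sig_Suc: "sig (Suc m) = sig m + (if m \<ge> 1 then a^m else 0)"
proof (cases "m \<ge> 1")
  case True
  then have "{1..<Suc m} = insert m {1..<m}" by auto
  then show ?thesis using True by (simp add: sig_def)
next
  case False
  then have "m = 0" by simp
  then show ?thesis by (simp add: sig_def)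
qed

lemma sig_nonneg: "sig m \<ge> 0"
  unfolding sig_def using a_nonneg by (intro sum_nonneg) auto

lemma sig_closed: "sig m * (1 - a) = (if m \<ge> 1 then a - a^m else 0)"
proof (induction m)
  case 0 then show ?case by (simp add: sig_def)
next
  case (Suc m)
  show ?case
  proof (cases "m \<ge> 1")
    case True
    have "(sig m + a^m) * (1 - a) = sig m * (1 - a) + a^m - a^(Suc m)"
      by (simp add: algebra_simps)
    then show ?thesis using Suc True by (simp add: sig_Suc)
  next
    case False
    then have "m = 0" by simp
    then show ?thesis by (simp add: sig_def)
  qed
qed

lemma sig_le: "sig m \<le> a / (1 - a)"
proof -
  have "sig m * (1 - a) \<le> a"
    using sig_closed[of m] a_nonneg by (auto simp: zero_le_power)
  then show ?thesis using a_lt1 by (simp add: field_simps)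
qed

lemma eta_nonneg: "eta m \<ge> 0"
  using sig_nonneg rho_ge1 by (simp add: eta_def)

lemma g_nonneg: "g m \<ge> 0"
  using rho_ge1 beta_nonneg by (simp add: g_def)

lemma N1: "eta m * (1 + beta) + 2 * (if m \<ge> 1 then a^m else 0) \<le> eta (Suc m)"
proof -
  have e: "eta (Suc m) = 2 * sig m * rho^m * rho + 2 * (if m \<ge> 1 then a^m else 0) * rho^(Suc m)"
    by (simp add: eta_def sig_Suc algebra_simps)
  have r1: "1 \<le> rho^(Suc m)" using rho_ge1 by (rule one_le_power)
  have "(if m \<ge> 1 then a^m else 0) \<le> (if m \<ge> 1 then a^m else 0) * rho^(Suc m)"
  proof (cases "m \<ge> 1")
    case True
    have "a^m * 1 \<le> a^m * rho^(Suc m)"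
      using r1 a_nonneg by (intro mult_left_mono) auto
    then show ?thesis using True by simp
  qed simp
  moreover have "eta m * (1 + beta) = 2 * sig m * rho^m * rho" by (simp add: eta_def rho_def)
  ultimately show ?thesis using e by simp
qed

lemma N2: "g m * (1 + beta) + pm * q * eta m \<le> g (Suc m)"
proof -
  have "pm * q * eta m \<le> pm * q * (2 * (a / (1 - a)) * rho^m)"
  proof -
    have "2 * sig m * rho^m \<le> 2 * (a / (1 - a)) * rho^m"
      using sig_le[of m] rho_ge1 by (intro mult_right_mono) auto
    then show ?thesis unfolding eta_def using pm_nonneg q_pos
      by (intro mult_left_mono) auto
  qed
  also have "\<dots> = beta * rho^m" by (simp add: beta_def)
  also have "\<dots> \<le> beta * rho^(Suc m)"
    using beta_nonneg rho_ge1 by (intro mult_left_mono power_increasing) auto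
  finally have "pm * q * eta m \<le> beta * rho^(Suc m)" .
  then show ?thesis by (simp add: g_def rho_def algebra_simps)
qed

lemma g_mono: "i \<le> m \<Longrightarrow> g i \<le> g m"
  unfolding g_def using rho_ge1 beta_nonneg
  by (intro mult_mono power_increasing) (auto intro!: mult_right_mono)

lemma sig_mono: "i \<le> m \<Longrightarrow> sig i \<le> sig m"
  unfolding sig_def using a_nonneg by (intro sum_mono2) auto

lemma eta_mono: "i \<le> m \<Longrightarrow> eta i \<le> eta m"
  unfolding eta_def using rho_ge1 sig_nonneg sig_mono
  by (intro mult_mono power_increasing) auto


lemma mu_eq: "mu = 1 / q" using S_pos S2_pos by (simp add: mu_def q_def)

definition "V m x = (if m = 0 then (if x = t then 1 else 0) else d x * d t * mu^m * q / S)"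
definition "Phi b x m = V m x * g m + (if b then d x * H m else 0)"
definition "Psi b m = (if m = 0 then (if b then 1 else 0)
   else dm * d t * mu^m * q * g m / S + (if b then dm * H m else 0))"
definition "K b m = (\<Sum>l\<in>{1..m}. real R^(l-1) * Psi b (m - l))"

lemma H_nonneg: "H m \<ge> 0"
  using eta_nonneg mu_pos q_pos dm_pos S_pos by (simp add: H_def)

lemma dt_pos: "d t > 0" using dpos tn by auto

lemma Psi_nonneg: "Psi b m \<ge> 0"
  using H_nonneg g_nonneg mu_pos q_pos dm_pos S_pos dt_pos by (simp add: Psi_def)

lemma K_nonneg: "K b m \<ge> 0"
  unfolding K_def using Psi_nonneg by (intro sum_nonneg) auto

lemma geo: "(\<Sum>l\<in>{1..m}. a^(l-1)) * (1 - a) = 1 - a^m"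
proof (induction m)
  case 0 then show ?case by simp
next
  case (Suc m)
  have "{1..Suc m} = insert (Suc m) {1..m}" by auto
  then have "(\<Sum>l\<in>{1..Suc m}. a^(l-1)) = (\<Sum>l\<in>{1..m}. a^(l-1)) + a^m" by simp
  moreover have "((\<Sum>l\<in>{1..m}. a^(l-1)) + a^m) * (1 - a)
     = (\<Sum>l\<in>{1..m}. a^(l-1)) * (1 - a) + a^m - a^(Suc m)" by (simp add: algebra_simps)
  ultimately show ?case using Suc by simp
qed

lemma geo_le: "(\<Sum>l\<in>{1..m}. a^(l-1)) \<le> 1 / (1 - a)"
proof -
  have "(\<Sum>l\<in>{1..m}. a^(l-1)) * (1 - a) \<le> 1" using geo[of m] a_nonneg by simp
  then show ?thesis using a_lt1 by (simp add: field_simps)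
qed

lemma mu_pow_shift: "l \<le> m \<Longrightarrow> mu^(m - l) = mu^m * q^l"
proof -
  assume "l \<le> m"
  then have "mu^m = mu^(m-l) * mu^l" by (simp flip: power_add)
  then have "mu^m * q^l = mu^(m-l) * (mu * q)^l" by (simp add: power_mult_distrib)
  then show ?thesis using muq by simp
qed

lemma K_bound:
  "K b m \<le> (dm * d t * mu^m * g m / S + (if b then dm^2 * eta m * mu^m / S else 0)) * (q^2 / (1 - a))
     + (if b \<and> m \<ge> 1 then real R^(m-1) else 0)"
proof -
  define C where "C = dm * d t * mu^m * g m / S + (if b then dm^2 * eta m * mu^m / S else 0)"
  have C0: "C \<ge> 0" unfolding C_def
    using g_nonneg eta_nonneg mu_pos dm_pos S_pos dt_pos by simp
  have trm: "real R^(l-1) * Psi b (m - l) \<le> C * (q^2 * a^(l-1)) + (if l = m then (if b then real R^(m-1) else 0) else 0)"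
    if l: "l \<in> {1..m}" for l
  proof (cases "l = m")
    case True
    have "real R^(l-1) * Psi b (m - l) = (if b then real R^(m-1) else 0)"
      using True by (simp add: Psi_def)
    moreover have "C * (q^2 * a^(l-1)) \<ge> 0" using C0 q_pos a_nonneg by simp
    ultimately show ?thesis using True by simp
  next
    case False
    then have lm: "l < m" "m - l \<noteq> 0" using l by auto
    have mu': "mu^(m-l) = mu^m * q^l" using lm by (intro mu_pow_shift) auto
    have gle: "g (m-l) \<le> g m" by (rule g_mono) simp
    have ele: "eta (m-l) \<le> eta m" by (rule eta_mono) simp
    have ql: "q^l = q * q^(l-1)" using l by (cases l) auto
    have "Psi b (m - l) = dm * d t * (mu^m * q^l) * q * g (m-l) / S
          + (if b then dm * (eta (m-l) * (mu^m * q^l) * q * dm / S) else 0)"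
      using lm mu' by (simp add: Psi_def H_def)
    also have "\<dots> = (q^2 * q^(l-1)) * (dm * d t * mu^m * g (m-l) / S
          + (if b then dm^2 * eta (m-l) * mu^m / S else 0))"
      unfolding ql by (simp add: algebra_simps power2_eq_square)
    also have "\<dots> \<le> (q^2 * q^(l-1)) * C"
      unfolding C_def using gle ele dm_pos dt_pos mu_pos S_pos q_pos
      by (intro mult_left_mono add_mono) (auto intro!: divide_right_mono mult_left_mono)
    finally have "real R^(l-1) * Psi b (m - l) \<le> real R^(l-1) * ((q^2 * q^(l-1)) * C)"
      by (intro mult_left_mono) auto
    also have "\<dots> = C * (q^2 * a^(l-1))" by (simp add: a_def power_mult_distrib)
    finally show ?thesis using False by simp
  qed
  have "K b m \<le> (\<Sum>l\<in>{1..m}. C * (q^2 * a^(l-1)) + (if l = m then (if b then real R^(m-1) else 0) else 0))"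
    unfolding K_def by (intro sum_mono trm)
  also have "\<dots> = C * q^2 * (\<Sum>l\<in>{1..m}. a^(l-1)) + (if b \<and> m \<ge> 1 then real R^(m-1) else 0)"
    by (simp add: sum.distrib sum_distrib_left mult.assoc)
  also have "\<dots> \<le> C * q^2 * (1 / (1 - a)) + (if b \<and> m \<ge> 1 then real R^(m-1) else 0)"
    using C0 geo_le by (intro add_mono mult_left_mono) auto
  finally show ?thesis by (simp add: C_def)
qed


lemma KEY:
  assumes x: "x \<in> {1..n}"
  shows "V (Suc m) x * g m + (if b then d x * mu * H m else d x * (d t)^2 * H m / S)
     + (d x * dm / S) * (2 * real R) * K b m \<le> Phi b x (Suc m)"
proof -
  define P where "P = d x * d t * mu^m / S"
  define Q where "Q = d x * (dm * mu^m / S)"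
  have dx: "d x > 0" using dpos x by auto
  have dtdm: "d t \<le> dm" using d_le_dm tn by auto
  have P0: "P \<ge> 0" and Q0: "Q \<ge> 0"
    using dx dt_pos mu_pos S_pos dm_pos by (auto simp: P_def Q_def)
  have a1: "1 - a > 0" using a_lt1 by simp
  have Vs: "V (Suc m) x = P"
  proof -
    have "V (Suc m) x = d x * d t * (mu^m * (mu * q)) / S" by (simp add: V_def algebra_simps)
    then show ?thesis using muq by (simp add: P_def)
  qed
  have muH: "d x * mu * H m = Q * eta m"
  proof -
    have "d x * mu * H m = d x * eta m * mu^m * (mu * q) * dm / S" by (simp add: H_def algebra_simps)
    then show ?thesis using muq by (simp add: Q_def)
  qed
  have HS: "d x * H (Suc m) = Q * eta (Suc m)"
  proof -
    have "d x * H (Suc m) = d x * eta (Suc m) * mu^m * (mu * q) * dm / S" by (simp add: H_def algebra_simps)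
    then show ?thesis using muq by (simp add: Q_def)
  qed
  have Phi_eq: "Phi b x (Suc m) = P * g (Suc m) + (if b then Q * eta (Suc m) else 0)"
    using Vs HS by (simp add: Phi_def)
  have i1: "(d x * dm / S) * (2 * real R) * ((dm * d t * mu^m * g m / S) * (q^2 / (1 - a))) = P * g m * beta"
    using S_pos a1 by (simp add: P_def beta_def pm_def a_def field_simps power2_eq_square)
  have i2: "(d x * dm / S) * (2 * real R) * ((dm^2 * eta m * mu^m / S) * (q^2 / (1 - a))) = Q * (eta m * beta)"
    using S_pos a1 by (simp add: Q_def beta_def pm_def a_def field_simps power2_eq_square)
  have i3: "(d x * dm / S) * (2 * real R) * (if m \<ge> 1 then real R^(m-1) else 0) = Q * (2 * (if m \<ge> 1 then a^m else 0))"
  proof (cases "m \<ge> 1")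
    case True
    have RR: "real R * real R^(m-1) = real R^m" using True by (cases m) auto
    have "a^m * mu^m = real R^m" using muq by (simp add: a_def power_mult_distrib flip: mult.assoc)
      (metis mult.assoc mult.commute mult_1_right power_mult_distrib power_one)
    then have "Q * (2 * a^m) = (d x * dm / S) * 2 * real R^m" by (simp add: Q_def algebra_simps)
    then show ?thesis using True RR by (simp add: algebra_simps)
  qed simp
  have Kb: "(d x * dm / S) * (2 * real R) * K b m \<le> (d x * dm / S) * (2 * real R) *
     ((dm * d t * mu^m * g m / S + (if b then dm^2 * eta m * mu^m / S else 0)) * (q^2 / (1 - a))
     + (if b \<and> m \<ge> 1 then real R^(m-1) else 0))"
    using dx dm_pos S_pos by (intro mult_left_mono K_bound) auto
  have N2': "g m * (1 + beta) \<le> g (Suc m)"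
    using N2[of m] pm_nonneg q_pos eta_nonneg[of m] by (smt (verit) mult_nonneg_nonneg)
  show ?thesis
  proof (cases b)
    case True
    have "(d x * dm / S) * (2 * real R) * K b m \<le> P * g m * beta + Q * (eta m * beta)
         + Q * (2 * (if m \<ge> 1 then a^m else 0))"
      using Kb True i1 i2 i3 by (simp add: algebra_simps)
    moreover have "P * (g m * (1 + beta)) \<le> P * g (Suc m)" using N2' P0 by (intro mult_left_mono)
    moreover have "Q * (eta m * (1 + beta) + 2 * (if m \<ge> 1 then a^m else 0)) \<le> Q * eta (Suc m)"
      using N1 Q0 by (intro mult_left_mono)
    ultimately show ?thesis using True Vs muH Phi_eq by (simp add: algebra_simps)
  next
    case False
    have "(d x * dm / S) * (2 * real R) * K b m \<le> P * g m * beta"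
      using Kb False i1 by (simp add: algebra_simps)
    moreover have "d x * (d t)^2 * H m / S \<le> P * (pm * q * eta m)"
    proof -
      have "d x * (d t)^2 * H m / S = (d x * d t * mu^m / S) * (d t * dm / S) * q * eta m"
        by (simp add: H_def power2_eq_square field_simps)
      also have "\<dots> \<le> (d x * d t * mu^m / S) * (dm * dm / S) * q * eta m"
        using dtdm dm_pos S_pos P0 q_pos eta_nonneg[of m] dt_pos
        by (intro mult_right_mono mult_left_mono divide_right_mono) (auto simp: P_def)
      finally show ?thesis by (simp add: P_def pm_def power2_eq_square algebra_simps)
    qed
    moreover have "P * (g m * (1 + beta) + pm * q * eta m) \<le> P * g (Suc m)"
      using N2 P0 by (intro mult_left_mono)
    ultimately show ?thesis using False Vs Phi_eq by (simp add: algebra_simps)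
  qed
qed


definition pe :: "nat set \<Rightarrow> real" where "pe e = CL_edge_prob n d e"

lemma pe_xy: "pe {x, y} = d x * d y / S"
  by (cases "x \<le> y") (auto simp: pe_def CL_edge_prob_def CL_p_def min_def max_def mult.commute)

lemma pe_nonneg: "x \<in> {1..n} \<Longrightarrow> y \<in> {1..n} \<Longrightarrow> pe {x, y} \<ge> 0"
  using dpos S_pos by (auto simp: pe_xy intro!: mult_nonneg_nonneg less_imp_le)

lemma pe_le: "x \<in> {1..n} \<Longrightarrow> y \<in> {1..n} \<Longrightarrow> pe {x, y} \<le> d x * dm / S"
proof -
  assume x: "x \<in> {1..n}" and y: "y \<in> {1..n}"
  have "d x > 0" using dpos x by auto
  then have "d x * d y \<le> d x * dm" using d_le_dm[OF y] by (intro mult_left_mono) auto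
  then show ?thesis unfolding pe_xy using S_pos by (intro divide_right_mono) auto
qed

lemma sum_d: "(\<Sum>y\<in>{1..n}. d y) = S" by (simp add: CL_S_def)
lemma sum_d2: "(\<Sum>y\<in>{1..n}. d y * d y) = S2" by (simp add: CL_S2_def power2_eq_square)

lemma sum_pe_d: "(\<Sum>y\<in>{1..n}. pe {x, y} * d y) = d x * mu"
proof -
  have "(\<Sum>y\<in>{1..n}. pe {x, y} * d y) = (d x / S) * (\<Sum>y\<in>{1..n}. d y * d y)"
    by (simp add: pe_xy sum_distrib_left algebra_simps)
  then show ?thesis unfolding sum_d2 mu_def by simp
qed

lemma sum_pe_V: "(\<Sum>y\<in>{1..n}. pe {x, y} * V m y) = V (Suc m) x"
proof (cases "m = 0")
  case True
  have "(\<Sum>y\<in>{1..n}. pe {x, y} * V m y) = (\<Sum>y\<in>{1..n}. if y = t then pe {x, t} else 0)"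
    using True by (intro sum.cong) (auto simp: V_def)
  also have "\<dots> = pe {x, t}" using tn by simp
  finally show ?thesis using True muq by (simp add: V_def pe_xy)
next
  case False
  have "(\<Sum>y\<in>{1..n}. pe {x, y} * V m y) = (\<Sum>y\<in>{1..n}. (d x * d t * mu^m * q / S / S) * (d y * d y))"
    using False by (intro sum.cong) (auto simp: V_def pe_xy)
  also have "\<dots> = (d x * d t * mu^m * q / S / S) * (\<Sum>y\<in>{1..n}. d y * d y)"
    by (rule sum_distrib_left[symmetric])
  also have "\<dots> = d x * d t * mu^(Suc m) * q / S"
    unfolding sum_d2 using S_pos by (simp add: mu_def field_simps)
  finally show ?thesis by (simp add: V_def)
qed

fun T :: "nat set set \<Rightarrow> nat option \<Rightarrow> nat \<Rightarrow> nat \<Rightarrow> real" where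
  "T E pr x 0 = (if x = t then 1 else 0)"
| "T E pr x (Suc m) = (\<Sum>y\<in>{y\<in>{1..n}. pr \<noteq> Some y}.
      (if {x, y} \<in> E then 1 else pe {x, y}) * T (insert {x, y} E) (Some x) y m)"

definition "Tnew E pr x k = (case k of 0 \<Rightarrow> T E pr x 0 | Suc m \<Rightarrow>
   (\<Sum>y\<in>{y\<in>{1..n}. pr \<noteq> Some y \<and> {x, y} \<notin> E}. pe {x, y} * T (insert {x, y} E) (Some x) y m))"
definition "Told E pr x k = (case k of 0 \<Rightarrow> 0 | Suc m \<Rightarrow>
   (\<Sum>y\<in>{y\<in>{1..n}. pr \<noteq> Some y \<and> {x, y} \<in> E}. T E (Some x) y m))"

lemma T_split: "T E pr x k = Tnew E pr x k + Told E pr x k"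
proof (cases k)
  case 0 then show ?thesis by (simp add: Tnew_def Told_def)
next
  case (Suc m)
  let ?Y = "{y\<in>{1..n}. pr \<noteq> Some y}"
  have "T E pr x k = (\<Sum>y\<in>?Y. if {x, y} \<in> E then T E (Some x) y m else pe {x, y} * T (insert {x, y} E) (Some x) y m)"
    using Suc by (auto intro!: sum.cong simp: insert_absorb)
  also have "\<dots> = (\<Sum>y\<in>?Y \<inter> {y. {x, y} \<in> E}. T E (Some x) y m)
      + (\<Sum>y\<in>?Y \<inter> - {y. {x, y} \<in> E}. pe {x, y} * T (insert {x, y} E) (Some x) y m)"
    by (rule sum.If_cases) simp
  also have "?Y \<inter> {y. {x, y} \<in> E} = {y\<in>{1..n}. pr \<noteq> Some y \<and> {x, y} \<in> E}" by auto
  also have "?Y \<inter> - {y. {x, y} \<in> E} = {y\<in>{1..n}. pr \<noteq> Some y \<and> {x, y} \<notin> E}" by auto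
  finally show ?thesis using Suc by (simp add: Tnew_def Told_def)
qed

definition "tv E x = (t = x \<or> t \<in> \<Union>E)"
definition "Dn E pr x = card {z\<in>{1..n}. pr \<noteq> Some z \<and> {x, z} \<in> E}"

lemma Dn_le: "finite E \<Longrightarrow> Dn E pr x \<le> card E"
proof -
  assume fE: "finite E"
  have "inj_on (\<lambda>z. {x, z}) {z\<in>{1..n}. pr \<noteq> Some z \<and> {x, z} \<in> E}"
    by (auto simp: inj_on_def doubleton_eq_iff)
  then show ?thesis unfolding Dn_def using fE by (intro card_inj_on_le) auto
qed

lemma H0: "H 0 = 0" by (simp add: H_def eta_def sig_def)

lemma Phi_le_Psi: "z \<in> {1..n} \<Longrightarrow> (z = t \<longrightarrow> b) \<Longrightarrow> Phi b z m \<le> Psi b m"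
proof -
  assume z: "z \<in> {1..n}" and zt: "z = t \<longrightarrow> b"
  show ?thesis
  proof (cases "m = 0")
    case True
    then show ?thesis using zt by (auto simp: Phi_def Psi_def V_def H0 g_def)
  next
    case False
    have dz: "d z \<le> dm" using d_le_dm[OF z] .
    have dz0: "d z > 0" using dpos z by auto
    have A: "d z * d t * mu^m * q / S * g m \<le> dm * d t * mu^m * q * g m / S"
    proof -
      have "d z * (d t * mu^m * q * g m) \<le> dm * (d t * mu^m * q * g m)"
        using dz dt_pos mu_pos q_pos g_nonneg[of m] by (intro mult_right_mono) auto
      then show ?thesis using S_pos by (simp add: divide_right_mono mult.assoc)
    qed
    have B: "(if b then d z * H m else 0) \<le> (if b then dm * H m else 0)"
      using dz H_nonneg[of m] by (auto intro: mult_right_mono)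
    show ?thesis using False A B by (simp add: Phi_def Psi_def V_def)
  qed
qed

lemma K_Suc: "K b (Suc m) = Psi b m + real R * K b m"
proof -
  have "{1..Suc m} = insert 1 (Suc ` {1..m})" by (auto simp: image_iff)
  then have "K b (Suc m) = Psi b m + (\<Sum>l\<in>Suc ` {1..m}. real R^(l-1) * Psi b (Suc m - l))"
    by (simp add: K_def)
  also have "(\<Sum>l\<in>Suc ` {1..m}. real R^(l-1) * Psi b (Suc m - l)) = (\<Sum>l\<in>{1..m}. real R^l * Psi b (m - l))"
    by (subst sum.reindex) auto
  also have "\<dots> = real R * K b m"
    unfolding K_def sum_distrib_left
    by (intro sum.cong refl) (auto simp: power_eq_if)
  finally show ?thesis .
qed

lemma K0: "K b 0 = 0" by (simp add: K_def)

lemma pairs: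
  assumes fE: "finite E" and fm: "\<forall>e\<in>E. \<exists>u v. e = {u, v}"
  shows "(\<Sum>y\<in>{1..n}. card {z\<in>{1..n}. {y, z} \<in> E}) \<le> 2 * card E"
proof -
  have fin2: "finite {(y, z). {y, z} = e} \<and> card {(y, z). {y, z} = e} \<le> 2" if "e \<in> E" for e
  proof -
    have ex: "\<exists>u v. e = {u, v}" using fm that by (rule bspec)
    obtain u v where uv: "e = {u, v}" using ex by metis
    have sub: "{(y, z). {y, z} = e} \<subseteq> {(u, v), (v, u)}" unfolding uv
      by (auto simp: doubleton_eq_iff)
    have "card {(y, z). {y, z} = e} \<le> card {(u, v), (v, u)}"
      by (rule card_mono[OF _ sub]) simp
    also have "\<dots> \<le> 2" using card_length[of "[(u, v), (v, u)]"] by (simp only: list.set length_Cons list.size)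
    finally show ?thesis using finite_subset[OF sub] by simp
  qed
  have "(\<Sum>y\<in>{1..n}. card {z\<in>{1..n}. {y, z} \<in> E}) = card (SIGMA y:{1..n}. {z\<in>{1..n}. {y, z} \<in> E})"
    by (simp add: card_SigmaI)
  also have "\<dots> \<le> card (\<Union>e\<in>E. {(y, z). {y, z} = e})"
    by (rule card_mono) (use fE fin2 in auto)
  also have "\<dots> \<le> (\<Sum>e\<in>E. card {(y, z). {y, z} = e})" by (rule card_UN_le[OF fE])
  also have "\<dots> \<le> (\<Sum>e\<in>E. 2)" by (rule sum_mono) (use fin2 in blast)
  finally show ?thesis by simp
qed


lemma main:
  "finite E \<Longrightarrow> card E + k \<le> R \<Longrightarrow> x \<in> {1..n} \<Longrightarrow> (\<forall>e\<in>E. \<exists>u v. e = {u, v}) \<Longrightarrow>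
   Tnew E pr x k \<le> Phi (tv E x) x k \<and> Told E pr x k \<le> real (Dn E pr x) * K (tv E x) k"
proof (induction k arbitrary: E pr x)
  case 0
  show ?case by (simp add: Tnew_def Told_def Phi_def V_def H0 g_def K0)
next
  case (Suc m)
  note IH = Suc.IH
  have fE: "finite E" and cE: "card E + Suc m \<le> R" and xn: "x \<in> {1..n}"
    and fm: "\<forall>e\<in>E. \<exists>u v. e = {u, v}" using Suc.prems by auto
  have dx: "d x > 0" using dpos xn by auto
  let ?b = "tv E x"
  have old: "Told E pr x (Suc m) \<le> real (Dn E pr x) * K ?b (Suc m)"
  proof -
    let ?Z = "{y\<in>{1..n}. pr \<noteq> Some y \<and> {x, y} \<in> E}"
    have each: "T E (Some x) z m \<le> K ?b (Suc m)" if z: "z \<in> ?Z" for z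
    proof -
      have zn: "z \<in> {1..n}" and xz: "{x, z} \<in> E" using z by auto
      have tvz: "tv E z = ?b" using xz by (auto simp: tv_def)
      have ih: "Tnew E (Some x) z m \<le> Phi (tv E z) z m \<and>
          Told E (Some x) z m \<le> real (Dn E (Some x) z) * K (tv E z) m"
        using IH[of E z "Some x"] fE cE fm zn by auto
      have p1: "Phi ?b z m \<le> Psi ?b m" using zn tvz by (intro Phi_le_Psi) (auto simp: tv_def)
      have p2: "real (Dn E (Some x) z) * K ?b m \<le> real R * K ?b m"
        using Dn_le[OF fE, of "Some x" z] cE K_nonneg by (intro mult_right_mono) auto
      have "T E (Some x) z m \<le> Phi ?b z m + real (Dn E (Some x) z) * K ?b m"
        using T_split[of E "Some x" z m] ih tvz by simp
      also have "\<dots> \<le> Psi ?b m + real R * K ?b m" using p1 p2 by (rule add_mono)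
      finally show ?thesis by (simp add: K_Suc)
    qed
    have "Told E pr x (Suc m) = (\<Sum>z\<in>?Z. T E (Some x) z m)" by (simp add: Told_def)
    also have "\<dots> \<le> (\<Sum>z\<in>?Z. K ?b (Suc m))" by (intro sum_mono each)
    also have "\<dots> = real (Dn E pr x) * K ?b (Suc m)" by (simp add: Dn_def)
    finally show ?thesis .
  qed
  have new: "Tnew E pr x (Suc m) \<le> Phi ?b x (Suc m)"
  proof -
    let ?Y = "{y\<in>{1..n}. pr \<noteq> Some y \<and> {x, y} \<notin> E}"
    define cy where "cy y = card {z\<in>{1..n}. {y, z} \<in> E}" for y
    define ex where "ex y = (if ?b then d y * H m else if y = t then d t * H m else 0)" for y
    define f where "f y = pe {x, y} * (V m y * g m + ex y) + (d x * dm / S) * (real (cy y) * K ?b m)" for y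
    have each: "pe {x, y} * T (insert {x, y} E) (Some x) y m \<le> f y" if y: "y \<in> ?Y" for y
    proof -
      let ?E' = "insert {x, y} E"
      have yn: "y \<in> {1..n}" and xyE: "{x, y} \<notin> E" using y by auto
      have fE': "finite ?E'" using fE by simp
      have cE': "card ?E' + m \<le> R" using fE cE xyE by simp
      have fm': "\<forall>e\<in>?E'. \<exists>u v. e = {u, v}" using fm by auto
      have ih: "Tnew ?E' (Some x) y m \<le> Phi (tv ?E' y) y m \<and>
          Told ?E' (Some x) y m \<le> real (Dn ?E' (Some x) y) * K (tv ?E' y) m"
        using IH[OF fE' cE' yn fm'] .
      have tv': "tv ?E' y = (?b \<or> y = t)" by (auto simp: tv_def)
      have Phi': "Phi (tv ?E' y) y m = V m y * g m + ex y"
        using tv' by (auto simp: Phi_def ex_def)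
      have Dsub: "Dn ?E' (Some x) y \<le> cy y"
        unfolding Dn_def cy_def
        by (rule card_mono) (auto simp: doubleton_eq_iff)
      have DK: "real (Dn ?E' (Some x) y) * K (tv ?E' y) m \<le> real (cy y) * K ?b m"
      proof (cases "cy y = 0")
        case True
        then have "Dn ?E' (Some x) y = 0" using Dsub by simp
        then show ?thesis using K_nonneg[of ?b m] by simp
      next
        case False
        then obtain z where "z \<in> {z\<in>{1..n}. {y, z} \<in> E}"
          unfolding cy_def by (metis all_not_in_conv card.empty)
        then have "y \<in> \<Union>E" by auto
        then have "tv ?E' y = ?b" using tv' by (auto simp: tv_def)
        then show ?thesis using Dsub K_nonneg[of ?b m] by (auto intro: mult_right_mono)
      qed
      have T': "T ?E' (Some x) y m \<le> (V m y * g m + ex y) + real (cy y) * K ?b m"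
        using T_split[of ?E' "Some x" y m] ih Phi' DK by linarith
      have pe0: "pe {x, y} \<ge> 0" using pe_nonneg xn yn by auto
      have "pe {x, y} * T ?E' (Some x) y m \<le> pe {x, y} * ((V m y * g m + ex y) + real (cy y) * K ?b m)"
        using T' pe0 by (rule mult_left_mono)
      also have "\<dots> = pe {x, y} * (V m y * g m + ex y) + pe {x, y} * (real (cy y) * K ?b m)"
        by (simp add: algebra_simps)
      also have "pe {x, y} * (real (cy y) * K ?b m) \<le> (d x * dm / S) * (real (cy y) * K ?b m)"
        using pe_le[OF xn yn] K_nonneg[of ?b m] by (intro mult_right_mono) auto
      finally show ?thesis by (simp add: f_def)
    qed
    have f0: "f y \<ge> 0" if "y \<in> {1..n}" for y
    proof -
      have dy: "d y > 0" using dpos that by auto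
      have "V m y \<ge> 0" using dy dt_pos mu_pos q_pos S_pos by (auto simp: V_def)
      moreover have "ex y \<ge> 0" using dy dt_pos H_nonneg[of m] by (auto simp: ex_def)
      moreover have "pe {x, y} \<ge> 0" using pe_nonneg xn that by auto
      moreover have "d x * dm / S \<ge> 0" using dx dm_pos S_pos by auto
      ultimately show ?thesis using g_nonneg[of m] K_nonneg[of ?b m] unfolding f_def
        by (intro add_nonneg_nonneg mult_nonneg_nonneg) auto
    qed
    have "Tnew E pr x (Suc m) = (\<Sum>y\<in>?Y. pe {x, y} * T (insert {x, y} E) (Some x) y m)"
      by (simp add: Tnew_def)
    also have "\<dots> \<le> (\<Sum>y\<in>?Y. f y)" by (intro sum_mono each)
    also have "\<dots> \<le> (\<Sum>y\<in>{1..n}. f y)" using f0 by (intro sum_mono2) auto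
    also have "\<dots> = g m * (\<Sum>y\<in>{1..n}. pe {x, y} * V m y) + (\<Sum>y\<in>{1..n}. pe {x, y} * ex y)
        + (d x * dm / S) * K ?b m * (\<Sum>y\<in>{1..n}. real (cy y))"
      by (simp add: f_def sum.distrib sum_distrib_left sum_distrib_right sum_divide_distrib algebra_simps)
    also have "(\<Sum>y\<in>{1..n}. pe {x, y} * V m y) = V (Suc m) x" by (rule sum_pe_V)
    also have "(\<Sum>y\<in>{1..n}. pe {x, y} * ex y) = (if ?b then d x * mu * H m else d x * (d t)^2 * H m / S)"
    proof (cases ?b)
      case True
      then have "(\<Sum>y\<in>{1..n}. pe {x, y} * ex y) = H m * (\<Sum>y\<in>{1..n}. pe {x, y} * d y)"
        by (simp add: ex_def sum_distrib_left algebra_simps)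
      then show ?thesis using True sum_pe_d[of x] by (simp add: algebra_simps)
    next
      case False
      then have "(\<Sum>y\<in>{1..n}. pe {x, y} * ex y) = (\<Sum>y\<in>{1..n}. if y = t then pe {x, t} * d t * H m else 0)"
        by (intro sum.cong) (auto simp: ex_def)
      also have "\<dots> = pe {x, t} * d t * H m" using tn by simp
      finally show ?thesis using False by (simp add: pe_xy power2_eq_square)
    qed
    also have "(\<Sum>y\<in>{1..n}. real (cy y)) \<le> 2 * real R"
    proof -
      have "(\<Sum>y\<in>{1..n}. cy y) \<le> 2 * card E" unfolding cy_def by (rule pairs[OF fE fm])
      also have "\<dots> \<le> 2 * R" using cE by simp
      finally show ?thesis by (simp flip: of_nat_sum)
    qed
    then have "(d x * dm / S) * K ?b m * (\<Sum>y\<in>{1..n}. real (cy y)) \<le> (d x * dm / S) * K ?b m * (2 * real R)"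
      using dx dm_pos S_pos K_nonneg[of ?b m] by (intro mult_left_mono) auto
    finally have "Tnew E pr x (Suc m) \<le> V (Suc m) x * g m + (if ?b then d x * mu * H m else d x * (d t)^2 * H m / S)
        + (d x * dm / S) * (2 * real R) * K ?b m" by (simp add: algebra_simps)
    also have "\<dots> \<le> Phi ?b x (Suc m)" by (rule KEY[OF xn])
    finally show ?thesis .
  qed
  show ?case using new old by simp
qed


fun okL :: "nat option \<Rightarrow> nat \<Rightarrow> nat list \<Rightarrow> bool" where
  "okL pr x [] = (x = t)"
| "okL pr x (y # c) = (y \<in> {1..n} \<and> pr \<noteq> Some y \<and> okL (Some x) y c)"

fun edgL :: "nat \<Rightarrow> nat list \<Rightarrow> nat set set" where
  "edgL x [] = {}"
| "edgL x (y # c) = insert {x, y} (edgL y c)"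

lemma finite_edgL: "finite (edgL x c)"
  by (induction c arbitrary: x) auto

lemma okL_set: "okL pr x c \<Longrightarrow> set c \<subseteq> {1..n}"
  by (induction c arbitrary: pr x) auto

lemma finite_C: "finite {c. length c = k \<and> okL pr x c}"
proof (rule finite_subset)
  show "{c. length c = k \<and> okL pr x c} \<subseteq> {c. set c \<subseteq> {1..n} \<and> length c = k}"
    using okL_set by blast
  show "finite {c. set c \<subseteq> {1..n} \<and> length c = k}" by (rule finite_lists_length_eq) simp
qed

lemma prod_ins:
  assumes "finite B"
  shows "(\<Prod>e\<in>insert u B - E. f e) = (if u \<in> E then 1 else f u) * (\<Prod>e\<in>B - insert u E. f e)"
proof (cases "u \<in> E")
  case True
  then have eq: "insert u B - E = B - insert u E" by blast
  have "(\<Prod>e\<in>insert u B - E. f e) = (\<Prod>e\<in>B - insert u E. f e)" unfolding eq ..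
  then show ?thesis using True by simp
next
  case False
  then have eq: "insert u B - E = insert u (B - insert u E)" by blast
  have fin: "finite (B - insert u E)" using assms by simp
  have "(\<Prod>e\<in>insert u B - E. f e) = f u * (\<Prod>e\<in>B - insert u E. f e)"
    unfolding eq by (rule prod.insert[OF fin]) simp
  then show ?thesis using False by simp
qed

lemma T_eq: "T E pr x k = (\<Sum>c\<in>{c. length c = k \<and> okL pr x c}. \<Prod>e\<in>edgL x c - E. pe e)"
proof (induction k arbitrary: E pr x)
  case 0
  have "{c. length c = 0 \<and> okL pr x c} = (if x = t then {[]} else {})" by auto
  then show ?case by simp
next
  case (Suc m)
  let ?Y = "{y\<in>{1..n}. pr \<noteq> Some y}"
  let ?F = "\<lambda>y. {c. length c = m \<and> okL (Some x) y c}"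
  have set_eq: "{c. length c = Suc m \<and> okL pr x c} = (\<lambda>(y, c). y # c) ` (SIGMA y:?Y. ?F y)"
  proof
    show "{c. length c = Suc m \<and> okL pr x c} \<subseteq> (\<lambda>(y, c). y # c) ` (SIGMA y:?Y. ?F y)"
    proof
      fix c assume "c \<in> {c. length c = Suc m \<and> okL pr x c}"
      then obtain y c' where "c = y # c'" "length c' = m" "okL pr x (y # c')"
        by (auto simp: length_Suc_conv)
      then show "c \<in> (\<lambda>(y, c). y # c) ` (SIGMA y:?Y. ?F y)" by (auto intro!: image_eqI[of _ _ "(y, c')"])
    qed
  qed auto
  have inj: "inj_on (\<lambda>(y, c). y # c) (SIGMA y:?Y. ?F y)" by (auto simp: inj_on_def)
  have "(\<Sum>c\<in>{c. length c = Suc m \<and> okL pr x c}. \<Prod>e\<in>edgL x c - E. pe e)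
      = (\<Sum>(y, c)\<in>(SIGMA y:?Y. ?F y). \<Prod>e\<in>edgL x (y # c) - E. pe e)"
    unfolding set_eq by (subst sum.reindex[OF inj]) (simp add: case_prod_beta)
  also have "\<dots> = (\<Sum>y\<in>?Y. \<Sum>c\<in>?F y. \<Prod>e\<in>edgL x (y # c) - E. pe e)"
    by (rule sum.Sigma[symmetric]) (auto intro: finite_C)
  also have "\<dots> = (\<Sum>y\<in>?Y. (if {x, y} \<in> E then 1 else pe {x, y}) *
       (\<Sum>c\<in>?F y. \<Prod>e\<in>edgL y c - insert {x, y} E. pe e))"
  proof (rule sum.cong[OF refl])
    fix y
    have "(\<Sum>c\<in>?F y. \<Prod>e\<in>edgL x (y # c) - E. pe e)
        = (\<Sum>c\<in>?F y. (if {x, y} \<in> E then 1 else pe {x, y}) * (\<Prod>e\<in>edgL y c - insert {x, y} E. pe e))"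
      by (intro sum.cong refl) (simp only: edgL.simps prod_ins[OF finite_edgL])
    also have "\<dots> = (if {x, y} \<in> E then 1 else pe {x, y}) * (\<Sum>c\<in>?F y. \<Prod>e\<in>edgL y c - insert {x, y} E. pe e)"
      by (rule sum_distrib_left[symmetric])
    finally show "(\<Sum>c\<in>?F y. \<Prod>e\<in>edgL x (y # c) - E. pe e) = (if {x, y} \<in> E then 1 else pe {x, y}) *
       (\<Sum>c\<in>?F y. \<Prod>e\<in>edgL y c - insert {x, y} E. pe e)" .
  qed
  also have "\<dots> = T E pr x (Suc m)" using Suc.IH by simp
  finally show ?case ..
qed

definition nbi :: "nat list \<Rightarrow> bool" where "nbi xs = (\<forall>i. i + 2 < length xs \<longrightarrow> xs ! i \<noteq> xs ! (i + 2))"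

lemma allnat: "(\<forall>i::nat. P i) = (P 0 \<and> (\<forall>j. P (Suc j)))"
  by (metis not0_implies_Suc)

lemma nbi_short: "length xs \<le> 2 \<Longrightarrow> nbi xs" by (simp add: nbi_def)

lemma nbi_Cons: "nbi (u # l) = ((2 \<le> length l \<longrightarrow> u \<noteq> l ! 1) \<and> nbi l)"
  unfolding nbi_def by (subst allnat) (auto simp: numeral_2_eq_2)

fun optl :: "nat option \<Rightarrow> nat list" where
  "optl None = []" | "optl (Some u) = [u]"

lemma last_nth: "last (x # c) = (x # c) ! length c"
  by (induction c arbitrary: x) auto

lemma L_ok: "okL pr x c = (set c \<subseteq> {1..n} \<and> last (x # c) = t \<and> nbi (optl pr @ x # c))"
proof (induction c arbitrary: pr x)
  case Nil
  then show ?case by (cases pr) (auto intro: nbi_short)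
next
  case (Cons y c)
  show ?case
  proof (cases pr)
    case None
    then show ?thesis using Cons[of "Some x" y] by auto
  next
    case (Some p)
    then show ?thesis using Cons[of "Some x" y] by (auto simp: nbi_Cons)
  qed
qed

lemma L_edg: "(\<forall>e\<in>edgL x c. G e) = (\<forall>i<length c. G {(x # c) ! i, (x # c) ! (Suc i)})"
proof (induction c arbitrary: x)
  case Nil then show ?case by simp
next
  case (Cons y c)
  show ?case using Cons[of y] by (auto simp: less_Suc_eq_0_disj)
qed

lemma edgL_sub: "x \<in> {1..n} \<Longrightarrow> set c \<subseteq> {1..n} \<Longrightarrow> edgL x c \<subseteq> CL_edges n"
proof (induction c arbitrary: x)
  case Nil then show ?case by simp
next
  case (Cons y c)
  have y: "y \<in> {1..n}" and c: "set c \<subseteq> {1..n}" using Cons.prems by auto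
  have "{x, y} \<in> CL_edges n" unfolding CL_edges_def using Cons.prems(1) y by blast
  then show ?case using Cons.IH[OF y c] by simp
qed

lemma nbp_set:
  assumes sn: "s \<in> {1..n}"
  shows "{xs :: nat list. length xs = r + 1 \<and> set xs \<subseteq> {1..n} \<and>
      xs ! 0 = s \<and> xs ! r = t \<and> (\<forall>i<r. G {xs ! i, xs ! (i + 1)}) \<and>
      (\<forall>i. i + 2 \<le> r \<longrightarrow> xs ! i \<noteq> xs ! (i + 2))}
    = (\<lambda>c. s # c) ` {c. length c = r \<and> okL None s c \<and> (\<forall>e\<in>edgL s c. G e)}"
proof (intro set_eqI iffI)
  fix xs assume "xs \<in> {xs :: nat list. length xs = r + 1 \<and> set xs \<subseteq> {1..n} \<and>
      xs ! 0 = s \<and> xs ! r = t \<and> (\<forall>i<r. G {xs ! i, xs ! (i + 1)}) \<and>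
      (\<forall>i. i + 2 \<le> r \<longrightarrow> xs ! i \<noteq> xs ! (i + 2))}"
  then have len: "length xs = Suc r" and st: "set xs \<subseteq> {1..n}" and x0: "xs ! 0 = s"
    and xr: "xs ! r = t" and eg: "\<forall>i<r. G {xs ! i, xs ! (i + 1)}"
    and nb: "\<forall>i. i + 2 \<le> r \<longrightarrow> xs ! i \<noteq> xs ! (i + 2)" by auto
  obtain c where xs: "xs = s # c" using len x0 by (cases xs) auto
  have lc: "length c = r" using len xs by simp
  have ok: "okL None s c"
  proof -
    have "last (s # c) = t" using xr lc xs by (simp only: last_nth)
    moreover have "nbi (s # c)" using nb lc xs by (auto simp: nbi_def)
    ultimately show ?thesis using st xs by (simp add: L_ok)
  qed
  have "\<forall>e\<in>edgL s c. G e" using eg lc xs by (simp add: L_edg)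
  then show "xs \<in> (\<lambda>c. s # c) ` {c. length c = r \<and> okL None s c \<and> (\<forall>e\<in>edgL s c. G e)}"
    using xs lc ok by auto
next
  fix xs assume "xs \<in> (\<lambda>c. s # c) ` {c. length c = r \<and> okL None s c \<and> (\<forall>e\<in>edgL s c. G e)}"
  then obtain c where xs: "xs = s # c" and lc: "length c = r" and ok: "okL None s c"
    and eg: "\<forall>e\<in>edgL s c. G e" by auto
  have okc: "set c \<subseteq> {1..n}" "last (s # c) = t" "nbi (s # c)" using ok by (auto simp: L_ok)
  have "xs ! r = t" using okc(2) lc xs by (simp only: last_nth)
  moreover have "\<forall>i<r. G {xs ! i, xs ! (i + 1)}" using eg lc xs by (simp add: L_edg)
  moreover have "\<forall>i. i + 2 \<le> r \<longrightarrow> xs ! i \<noteq> xs ! (i + 2)" using okc(3) lc xs by (auto simp: nbi_def)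
  ultimately show "xs \<in> {xs :: nat list. length xs = r + 1 \<and> set xs \<subseteq> {1..n} \<and>
      xs ! 0 = s \<and> xs ! r = t \<and> (\<forall>i<r. G {xs ! i, xs ! (i + 1)}) \<and>
      (\<forall>i. i + 2 \<le> r \<longrightarrow> xs ! i \<noteq> xs ! (i + 2))}"
    using xs lc okc(1) sn by auto
qed


lemma ex_edge: "e \<in> CL_edges n \<Longrightarrow> \<exists>i j. e = {i, j} \<and> i \<in> {1..n} \<and> j \<in> {1..n}"
  unfolding CL_edges_def by simp
lemma finite_edges: "finite (CL_edges n)"
proof (rule finite_subset)
  show "CL_edges n \<subseteq> (\<lambda>(i, j). {i, j}) ` ({1..n} \<times> {1..n})"
  proof
    fix e assume "e \<in> CL_edges n"
    then obtain i j where "e = {i, j}" "i \<in> {1..n}" "j \<in> {1..n}" using ex_edge by metis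
    then show "e \<in> (\<lambda>(i, j). {i, j}) ` ({1..n} \<times> {1..n})" by (auto intro!: image_eqI[of _ _ "(i, j)"])
  qed
qed simp

lemma pe_01: "e \<in> CL_edges n \<Longrightarrow> 0 \<le> pe e \<and> pe e \<le> 1"
proof -
  assume "e \<in> CL_edges n"
  then obtain i j where e: "e = {i, j}" and i: "i \<in> {1..n}" and j: "j \<in> {1..n}"
    using ex_edge by metis
  have di: "d i > 0" using dpos i by auto
  have dj: "d j > 0" using dpos j by auto
  have si: "(d i)^2 \<le> S" using dsq i by auto
  have sj: "(d j)^2 \<le> S" using dsq j by auto
  have "(d i)^2 * (d j)^2 \<le> S * S"
    by (rule mult_mono[OF si sj]) (use S_pos in auto)
  then have sq: "(d i * d j)^2 \<le> S^2" by (simp add: power_mult_distrib power2_eq_square mult_ac)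
  have le: "d i * d j \<le> S" by (rule power2_le_imp_le[OF sq]) (use S_pos in simp)
  have p: "pe e = d i * d j / S" unfolding e by (rule pe_xy)
  have p0: "0 \<le> d i * d j / S" using di dj S_pos by simp
  have p1: "d i * d j / S \<le> 1" using le S_pos by simp
  show ?thesis using p p0 p1 by simp
qed

lemma prob_edges:
  assumes F: "F \<subseteq> CL_edges n"
  shows "measure_pmf.prob (chung_lu n d) {G. \<forall>e\<in>F. G e} = (\<Prod>e\<in>F. pe e)"
proof -
  have set: "{G. \<forall>e\<in>F. G e} = Pi (CL_edges n) (\<lambda>e. if e \<in> F then {True} else UNIV)"
    using F by (auto simp: Pi_def)
  have "measure_pmf.prob (chung_lu n d) {G. \<forall>e\<in>F. G e}
      = (\<Prod>e\<in>CL_edges n. measure_pmf.prob (bernoulli_pmf (CL_edge_prob n d e)) (if e \<in> F then {True} else UNIV))"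
    unfolding set chung_lu_def by (rule measure_Pi_pmf_Pi[OF finite_edges])
  also have "\<dots> = (\<Prod>e\<in>CL_edges n. if e \<in> F then pe e else 1)"
  proof (rule prod.cong[OF refl])
    fix e assume e: "e \<in> CL_edges n"
    show "measure_pmf.prob (bernoulli_pmf (CL_edge_prob n d e)) (if e \<in> F then {True} else UNIV)
        = (if e \<in> F then pe e else 1)"
      using pe_01[OF e] by (auto simp: measure_pmf_single pe_def)
  qed
  also have "\<dots> = (\<Prod>e\<in>CL_edges n \<inter> F. pe e)"
    by (rule prod.inter_restrict[OF finite_edges, symmetric])
  also have "CL_edges n \<inter> F = F" using F by blast
  finally show ?thesis .
qed

lemma expect:
  assumes sn: "s \<in> {1..n}"
  shows "measure_pmf.expectation (chung_lu n d) (\<lambda>G. real (NBP n G r s t)) = T {} None s r"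
proof -
  let ?C = "{c. length c = r \<and> okL None s c}"
  let ?S = "\<lambda>c. {G. \<forall>e\<in>edgL s c. G e}"
  have finC: "finite ?C" by (rule finite_C)
  have nbp: "real (NBP n G r s t) = (\<Sum>c\<in>?C. indicator (?S c) G)" for G
  proof -
    have "NBP n G r s t = card ((\<lambda>c. s # c) ` {c. length c = r \<and> okL None s c \<and> (\<forall>e\<in>edgL s c. G e)})"
      unfolding NBP_def nbp_set[OF sn] ..
    also have "\<dots> = card {c. length c = r \<and> okL None s c \<and> (\<forall>e\<in>edgL s c. G e)}"
      by (rule card_image) (simp add: inj_on_def)
    also have "{c. length c = r \<and> okL None s c \<and> (\<forall>e\<in>edgL s c. G e)} = {c\<in>?C. G \<in> ?S c}" by auto
    finally have "real (NBP n G r s t) = (\<Sum>c\<in>{c\<in>?C. G \<in> ?S c}. 1)" by simp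
    also have "\<dots> = (\<Sum>c\<in>?C. if G \<in> ?S c then 1 else 0)" by (rule sum.inter_filter[OF finC])
    also have "\<dots> = (\<Sum>c\<in>?C. indicator (?S c) G)" by (intro sum.cong refl) (simp add: indicator_def)
    finally show ?thesis .
  qed
  have "measure_pmf.expectation (chung_lu n d) (\<lambda>G. real (NBP n G r s t))
      = measure_pmf.expectation (chung_lu n d) (\<lambda>G. \<Sum>c\<in>?C. indicator (?S c) G)"
    by (simp only: nbp)
  also have "\<dots> = (\<Sum>c\<in>?C. measure_pmf.expectation (chung_lu n d) (indicator (?S c)))"
    by (rule Bochner_Integration.integral_sum) (simp add: integrable_indicator_iff, metis measure_pmf.emeasure_finite less_top)
  also have "\<dots> = (\<Sum>c\<in>?C. \<Prod>e\<in>edgL s c. pe e)"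
  proof (rule sum.cong[OF refl])
    fix c assume c: "c \<in> ?C"
    have sub: "edgL s c \<subseteq> CL_edges n" using c sn okL_set[of None s c] by (intro edgL_sub) auto
    show "measure_pmf.expectation (chung_lu n d) (indicator (?S c)) = (\<Prod>e\<in>edgL s c. pe e)"
      using prob_edges[OF sub] by simp
  qed
  also have "\<dots> = T {} None s r" by (simp add: T_eq)
  finally show ?thesis .
qed

lemma final_bound:
  assumes sn: "s \<in> {1..n}" and st: "s \<noteq> t" and r: "r \<ge> 1" and Rr: "R = r"
  shows "measure_pmf.expectation (chung_lu n d) (\<lambda>G. real (NBP n G r s t)) \<le> CL_p n d s t * mu^(r-1) * g r"
proof -
  have m: "Tnew {} None s r \<le> Phi (tv {} s) s r \<and> Told {} None s r \<le> real (Dn {} None s) * K (tv {} s) r"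
    using main[of "{}" r s None] sn Rr by simp
  have told: "Told {} None s r = 0" using r by (cases r) (auto simp: Told_def)
  have tvf: "tv {} s = False" using st by (simp add: tv_def)
  have V: "V r s = CL_p n d s t * mu^(r-1)"
  proof -
    have "mu^r * q = mu^(r-1) * (mu * q)" using r by (cases r) auto
    then show ?thesis using r muq by (simp add: V_def CL_p_def)
  qed
  have "measure_pmf.expectation (chung_lu n d) (\<lambda>G. real (NBP n G r s t)) = T {} None s r"
    by (rule expect[OF sn])
  also have "\<dots> = Tnew {} None s r" using T_split told by simp
  also have "\<dots> \<le> Phi False s r" using m tvf by simp
  also have "\<dots> = CL_p n d s t * mu^(r-1) * g r" by (simp add: Phi_def V)
  finally show ?thesis .
qed

lemma g_exp: "g m \<le> exp (2 * real m * beta)"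
proof -
  have "rho^m \<le> (exp beta)^m"
    unfolding rho_def using beta_nonneg
    by (intro power_mono) (auto simp: add.commute exp_ge_add_one_self)
  moreover have "1 + real m * beta \<le> exp (real m * beta)"
    by (simp add: add.commute exp_ge_add_one_self)
  ultimately have "g m \<le> (exp beta)^m * exp (real m * beta)"
    unfolding g_def using rho_ge1 beta_nonneg by (intro mult_mono) auto
  also have "\<dots> = exp (2 * real m * beta)" by (simp add: exp_of_nat_mult[symmetric] exp_add[symmetric] algebra_simps)
  finally show ?thesis .
qed

end

theorem theorem3:
  fixes n :: nat and d :: "nat \<Rightarrow> real" and s t r :: nat
  assumes dpos: "\<forall>i\<in>{1..n}. d i > 0"
    and dmax: "\<forall>i\<in>{1..n}. (d i)^2 \<le> CL_S n d"
    and S2gt: "CL_S2 n d > CL_S n d"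
    and s: "s \<in> {1..n}" and t: "t \<in> {1..n}" and st: "s \<noteq> t"
    and r: "r \<ge> 1" and r2: "2 * real r < CL_S2 n d / CL_S n d"
  shows "measure_pmf.expectation (chung_lu n d) (\<lambda>G. real (NBP n G r s t))
     \<le> CL_p n d s t * (CL_S2 n d / CL_S n d) ^ (r - 1) / (1 - CL_S n d / CL_S2 n d)
        * exp ((2 * real r * (CL_S n d / CL_S2 n d))^2 * CL_pmax n d
               / (1 - 2 * real r * CL_S n d / CL_S2 n d))"
proof -
  define S where "S = CL_S n d"
  define S2 where "S2 = CL_S2 n d"
  have tn: "n \<ge> 1" using s by auto
  have S_pos: "S > 0"
  proof -
    have "S = (\<Sum>i\<in>{1..n}. d i)" by (simp add: S_def CL_S_def)
    also have "\<dots> > 0"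
    proof (rule sum_pos)
      fix i assume "i \<in> {1..n}" then show "d i > 0" using dpos by auto
    qed (use tn in auto)
    finally show ?thesis .
  qed
  have S2_pos: "S2 > 0" using S2gt S_pos by (simp add: S_def S2_def)
  define q where "q = S / S2"
  have q_pos: "q > 0" using S_pos S2_pos by (simp add: q_def)
  have rq: "2 * real r * q < 1"
  proof -
    have "2 * real r < S2 / S" using r2 by (simp add: S_def S2_def)
    then have "2 * real r * S < S2" using S_pos by (simp add: field_simps)
    then show ?thesis using S2_pos by (simp add: q_def field_simps)
  qed
  have Rq: "real r * (CL_S n d / CL_S2 n d) < 1"
    using rq q_pos by (simp add: q_def S_def S2_def)
  interpret C: CLB n d t r
    by unfold_locales (use dpos dmax t Rq in auto)
  have E: "measure_pmf.expectation (chung_lu n d) (\<lambda>G. real (NBP n G r s t)) \<le> CL_p n d s t * C.mu^(r-1) * C.g r"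
    by (rule C.final_bound[OF s st r refl])
  define X where "X = (2 * real r * (CL_S n d / CL_S2 n d))^2 * CL_pmax n d / (1 - 2 * real r * CL_S n d / CL_S2 n d)"
  have qq: "C.q = q" by (simp add: C.q_def q_def S_def S2_def)
  have pmq: "C.pm = CL_pmax n d" by (simp add: C.pm_def CL_pmax_def)
  have aa: "C.a = real r * q" by (simp add: C.a_def qq)
  have X': "X = (2 * real r * q)^2 * C.pm / (1 - 2 * real r * q)"
    by (simp add: X_def q_def S_def S2_def pmq)
  have beta_le: "2 * real r * C.beta \<le> X"
  proof -
    have "2 * real r * C.beta = (2 * real r * q)^2 * C.pm / (1 - real r * q)"
      by (simp add: C.beta_def aa qq power2_eq_square field_simps)
    also have "\<dots> \<le> (2 * real r * q)^2 * C.pm / (1 - 2 * real r * q)"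
      using rq q_pos C.pm_nonneg by (intro divide_left_mono mult_nonneg_nonneg) auto
    finally show ?thesis by (simp add: X')
  qed
  have g: "C.g r \<le> exp X"
    using C.g_exp[of r] beta_le by (meson exp_le_cancel_iff order_trans)
  have P0: "CL_p n d s t \<ge> 0" using dpos s t S_pos by (auto simp: CL_p_def S_def intro!: divide_nonneg_pos mult_nonneg_nonneg less_imp_le)
  have M0: "C.mu^(r-1) \<ge> 0" using C.mu_pos by simp
  have mu': "C.mu = CL_S2 n d / CL_S n d" by (simp add: C.mu_def)
  have q1: "0 < 1 - q" "1 - q \<le> 1" using S2gt S_pos q_pos by (auto simp: q_def S_def S2_def)
  have "CL_p n d s t * C.mu^(r-1) * C.g r \<le> CL_p n d s t * C.mu^(r-1) * exp X"
    using g P0 M0 by (intro mult_left_mono) auto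
  also have "\<dots> \<le> CL_p n d s t * C.mu^(r-1) / (1 - q) * exp X"
  proof -
    have "CL_p n d s t * C.mu^(r-1) \<le> CL_p n d s t * C.mu^(r-1) / (1 - q)"
    proof -
      have "CL_p n d s t * C.mu^(r-1) * (1 - q) \<le> CL_p n d s t * C.mu^(r-1)"
        by (rule mult_left_le) (use q1 P0 M0 in auto)
      then show ?thesis using q1 by (simp add: le_divide_eq)
    qed
    then show ?thesis by (intro mult_right_mono) auto
  qed
  finally show ?thesis using E by (simp add: X_def mu' q_def S_def S2_def)
qed

end
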